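(* Let $A\subseteq\mathbb{R}^d$ be a rational affine subspace containing some point $\vec{x}\in\mathbb{N}^d$. Then there exists a constant $c>0$ such that for every $p^*\in\mathbb{N}_+$ and every $\vec{y}\in\{\vec{x}+p^*\vec{z}:\vec{z}\in\mathbb{Z}^d\}$ with $\vec{y}\notin A$, the Euclidean distance satisfies $\mathrm{dist}(\vec{y},A)\ge c\,p^*$.
   Context: A rational affine subspace of $\mathbb{R}^d$ is the solution set of a finite system of linear equations $\vec{a}\cdot\vec{z}=b$ with $\vec{a}\in\mathbb{Q}^d$, $b\in\mathbb{Q}$. *)

theory Defs
  imports "HOL-Analysis.Analysis"
begin

definition rational_affine_subspace :: "(real^'n) set \<Rightarrow> bool" where
  "rational_affine_subspace A \<longleftrightarrow>
     (\<exists>E :: ((real^'n) \<times> real) set. finite E \<and>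
        (\<forall>(a, b)\<in>E. (\<forall>i. a $ i \<in> \<rat>) \<and> b \<in> \<rat>) \<and>
        A = {z. \<forall>(a, b)\<in>E. a \<bullet> z = b})"

end

theory Submission
  imports Defs
begin

lemma common_denom:
  fixes f :: "'a \<Rightarrow> real"
  assumes "finite S" "\<forall>i\<in>S. f i \<in> \<rat>"
  shows "\<exists>D::nat. D > 0 \<and> (\<forall>i\<in>S. real D * f i \<in> \<int>)"
  using assms
proof (induction S rule: finite_induct)
  case empty
  then show ?case by (rule_tac x=1 in exI) auto
next
  case (insert j S)
  then obtain D where D: "D > 0" "\<forall>i\<in>S. real D * f i \<in> \<int>" by auto
  have "f j \<in> \<rat>" using insert by auto
  then obtain m b :: int where mb: "b > 0" "f j = of_int m / of_int b"
    by (rule Rats_cases') auto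
  define n where "n = nat b"
  have mn: "n > 0" "f j = of_int m / of_nat n" using mb by (auto simp: n_def)
  show ?case
  proof (rule exI[of _ "D * n"], intro conjI ballI)
    show "D * n > 0" using D mn by simp
  next
    fix i assume "i \<in> insert j S"
    then consider "i = j" | "i \<in> S" by auto
    then show "real (D * n) * f i \<in> \<int>"
    proof cases
      case 1
      have "real (D * n) * f i = of_int (int D * m)" using mn 1 by simp
      then show ?thesis by (metis Ints_of_int)
    next
      case 2
      have "real (D * n) * f i = real n * (real D * f i)" by simp
      then show ?thesis using D 2 by (metis Ints_mult Ints_of_nat)
    qed
  qed
qed

lemma denom_vec:
  fixes a :: "real^'n"
  assumes "\<forall>i. a $ i \<in> \<rat>"
  shows "\<exists>D::nat. D > 0 \<and> (\<forall>z::real^'n. (\<forall>i. z $ i \<in> \<int>) \<longrightarrow> real D * (a \<bullet> z) \<in> \<int>)"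
proof -
  obtain D :: nat where D: "D > 0" "\<forall>i\<in>UNIV. real D * a $ i \<in> \<int>"
    using common_denom[of UNIV "\<lambda>i. a $ i"] assms by auto
  show ?thesis
  proof (rule exI[of _ D], intro conjI allI impI)
    show "D > 0" by fact
    fix z :: "real^'n" assume z: "\<forall>i. z $ i \<in> \<int>"
    have "real D * (a \<bullet> z) = (\<Sum>i\<in>UNIV. (real D * a $ i) * z $ i)"
      by (simp add: inner_vec_def sum_distrib_left mult.assoc)
    also have "\<dots> \<in> \<int>" by (rule Ints_sum) (use D z in \<open>metis Ints_mult\<close>)
    finally show "real D * (a \<bullet> z) \<in> \<int>" .
  qed
qed

theorem lemma29:
  fixes A :: "(real^'n) set" and x :: "real^'n"
  assumes "rational_affine_subspace A"
    and "x \<in> A"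
    and "\<forall>i. x $ i \<in> \<nat>"
  shows "\<exists>c > 0. \<forall>p :: nat. p \<ge> 1 \<longrightarrow>
           (\<forall>z :: real^'n. (\<forall>i. z $ i \<in> \<int>) \<longrightarrow>
              x + real p *\<^sub>R z \<notin> A \<longrightarrow>
              infdist (x + real p *\<^sub>R z) A \<ge> c * real p)"
proof -
  obtain E :: "((real^'n) \<times> real) set" where E: "finite E"
    "\<forall>(a, b)\<in>E. (\<forall>i. a $ i \<in> \<rat>) \<and> b \<in> \<rat>" "A = {z. \<forall>(a, b)\<in>E. a \<bullet> z = b}"
    using assms(1) unfolding rational_affine_subspace_def by blast
  define Dn where "Dn = (\<lambda>a::real^'n. SOME D::nat. D > 0 \<and> (\<forall>z::real^'n. (\<forall>i. z $ i \<in> \<int>) \<longrightarrow> real D * (a \<bullet> z) \<in> \<int>))"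
  have Dn: "Dn a > 0 \<and> (\<forall>z::real^'n. (\<forall>i. z $ i \<in> \<int>) \<longrightarrow> real (Dn a) * (a \<bullet> z) \<in> \<int>)"
    if "(a, b) \<in> E" for a b
  proof -
    have "\<forall>i. a $ i \<in> \<rat>" using E(2) that by auto
    from denom_vec[OF this] show ?thesis unfolding Dn_def by (rule someI_ex)
  qed
  define g where "g = (\<lambda>(a::real^'n, b::real). 1 / (real (Dn a) * (norm a + 1)))"
  define c where "c = Min (insert 1 (g ` E))"
  have gpos: "g e > 0" if "e \<in> E" for e
    using Dn[of "fst e" "snd e"] that by (cases e) (auto simp: g_def intro!: mult_pos_pos add_nonneg_pos)
  have cpos: "c > 0" unfolding c_def using E(1) gpos by (subst Min_gr_iff) auto
  have cle: "c \<le> g e" if "e \<in> E" for e unfolding c_def using E(1) that by (intro Min_le) auto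
  show ?thesis
  proof (rule exI[of _ c], intro conjI allI impI)
    show "c > 0" by fact
    fix p :: nat and z :: "real^'n"
    assume p: "p \<ge> 1" and z: "\<forall>i. z $ i \<in> \<int>" and ny: "x + real p *\<^sub>R z \<notin> A"
    define y where "y = x + real p *\<^sub>R z"
    obtain a b where ab: "(a, b) \<in> E" "a \<bullet> y \<noteq> b" using ny E(3) unfolding y_def by auto
    have ax: "a \<bullet> x = b" using assms(2) E(3) ab(1) by auto
    have ay: "a \<bullet> y - b = real p * (a \<bullet> z)" using ax unfolding y_def by (simp add: inner_add_right)
    have az: "a \<bullet> z \<noteq> 0" using ay ab(2) by auto
    have Dpos: "Dn a > 0" and Dint: "real (Dn a) * (a \<bullet> z) \<in> \<int>" using Dn[OF ab(1)] z by auto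
    have "real (Dn a) * (a \<bullet> z) \<noteq> 0" using Dpos az by simp
    then have D1: "\<bar>real (Dn a) * (a \<bullet> z)\<bar> \<ge> 1" using Dint
      using Ints_nonzero_abs_ge1 by blast
    have key: "c * real p \<le> dist y w" if w: "w \<in> A" for w
    proof -
      have aw: "a \<bullet> w = b" using w E(3) ab(1) by auto
      have "a \<bullet> (y - w) = real p * (a \<bullet> z)" using ay aw by (simp add: inner_diff_right)
      then have "real p * \<bar>a \<bullet> z\<bar> \<le> norm a * dist y w"
        using Cauchy_Schwarz_ineq2[of a "y - w"] by (simp add: dist_norm abs_mult)
      also have "\<dots> \<le> (norm a + 1) * dist y w" by (simp add: mult_right_mono)
      finally have h1: "real p * \<bar>a \<bullet> z\<bar> \<le> (norm a + 1) * dist y w" .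
      have "real p \<le> real p * \<bar>real (Dn a) * (a \<bullet> z)\<bar>" using D1 mult_left_mono[OF D1, of "real p"] by simp
      also have "\<dots> = real (Dn a) * (real p * \<bar>a \<bullet> z\<bar>)" by (simp add: abs_mult)
      also have "\<dots> \<le> real (Dn a) * ((norm a + 1) * dist y w)" using h1 by (simp add: mult_left_mono)
      finally have h2: "real p \<le> real (Dn a) * (norm a + 1) * dist y w" by (simp add: mult.assoc)
      have pos: "real (Dn a) * (norm a + 1) > 0" using Dpos by (intro mult_pos_pos add_nonneg_pos) auto
      have "g (a, b) * real p \<le> dist y w"
        using h2 pos by (simp add: g_def field_simps)
      moreover have "c * real p \<le> g (a, b) * real p" using cle[OF ab(1)] by (simp add: mult_right_mono)
      ultimately show ?thesis by linarith
    qed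
    have "A \<noteq> {}" using assms(2) by auto
    then show "infdist (x + real p *\<^sub>R z) A \<ge> c * real p"
      unfolding y_def[symmetric] infdist_notempty[OF \<open>A \<noteq> {}\<close>]
      by (intro cINF_greatest key) auto
  qed
qed

end
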